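(* For $v\in\mathbb{C}$, $w\in\mathbb{C}\setminus\{1\}$ and integers $r\geq0$ define \begin{align*} U_r(w;v)&=\delta_{r,0}-\sum_{m=0}^{r}(-1)^m\binom{v}{r-m}\sum_{k=0}^{m}\frac{w}{(w-1)^{r+k+1}}\frac{(r+k)!}{k!}\mathcal{A}_{m,k}\!\left(\tfrac12,\tfrac13,\tfrac14,\dots\right),\\ \tilde U_r(w;v)&=-\sum_{m=0}^{r}\frac{v^{r-m}}{(r-m)!}\sum_{k=0}^{m}\frac{(-w)^k}{(w-1)^{r+k+1}}\frac{(r+k)!}{k!}\mathcal{A}_{m,k}\!\left(\tfrac1{2!},\tfrac1{3!},\tfrac1{4!},\dots\right). \end{align*} Then $U_0(w;v)=\tilde U_0(w;v)$ and $U_r(w;v)=\tilde U_r(w;v)+v\,\tilde U_{r-1}(w;v)$ for $r\geq1$.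
   Context: De Moivre polynomial $\mathcal{A}_{n,k}(a_1,a_2,\dots)$: coefficient of $x^n$ in $(a_1x+a_2x^2+\cdots)^k$ (so $\mathcal{A}_{0,0}=1$, $\mathcal{A}_{n,k}=0$ for $n<k$). $\binom{v}{j}=v(v-1)\cdots(v-j+1)/j!$; $\delta_{r,0}$ Kronecker delta. *)

theory Defs
  imports Complex_Main "HOL-Computational_Algebra.Formal_Power_Series"
begin

text \<open>De Moivre polynomial: coefficient of x^n in (a_1 x + a_2 x^2 + ...)^k,
  where the sequence a_1, a_2, ... is given as a function a with a j = a_j (j >= 1);
  the value a 0 is ignored.\<close>
definition demoivre :: "(nat \<Rightarrow> 'a::comm_ring_1) \<Rightarrow> nat \<Rightarrow> nat \<Rightarrow> 'a" where
  "demoivre a n k = fps_nth (Abs_fps (\<lambda>j. if j = 0 then 0 else a j) ^ k) n"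

definition U :: "nat \<Rightarrow> complex \<Rightarrow> complex \<Rightarrow> complex" where
  "U r w v = (if r = 0 then 1 else 0) -
     (\<Sum>m=0..r. (-1)^m * (v gchoose (r - m)) *
        (\<Sum>k=0..m. w / (w - 1)^(r + k + 1) * (fact (r + k) / fact k) *
           demoivre (\<lambda>j. 1 / of_nat (j + 1)) m k))"

definition U_tilde :: "nat \<Rightarrow> complex \<Rightarrow> complex \<Rightarrow> complex" where
  "U_tilde r w v = -
     (\<Sum>m=0..r. v^(r - m) / fact (r - m) *
        (\<Sum>k=0..m. (-w)^k / (w - 1)^(r + k + 1) * (fact (r + k) / fact k) *
           demoivre (\<lambda>j. 1 / fact (j + 1)) m k))"

end

theory Submission
  imports Defs
begin
unbundle fps_syntax

lemma cv_aux:
  fixes u W :: "complex fps" assumes uW: "u * W = 1"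
  shows "(W^s + fps_X * fps_deriv u * W^(s+1)) $ s = (if s = 0 then 1 else 0)"
proof (cases s)
  case 0
  then show ?thesis by simp
next
  case (Suc t)
  have d: "fps_deriv u * W + u * fps_deriv W = 0"
    using arg_cong[OF uW, of fps_deriv] by (simp add: algebra_simps)
  have "fps_deriv u * W^2 = - fps_deriv W"
  proof -
    have "fps_deriv u * W^2 = (fps_deriv u * W + u * fps_deriv W) * W - (u*W) * fps_deriv W"
      by (simp add: algebra_simps power2_eq_square)
    then show ?thesis using d uW by simp
  qed
  moreover have "W^(s+1) = W^2 * W^t" using Suc by (simp add: power_add[symmetric])
  ultimately have e: "fps_deriv u * W^(s+1) = - fps_deriv W * W^t"
    by (simp add: mult.assoc[symmetric])
  have f: "(fps_X * (fps_deriv W * W^t)) $ s = (fps_deriv W * W^t) $ t"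
    using Suc by simp
  have g: "fps_deriv (W^(t+1)) = fps_const (of_nat (t+1)) * (fps_deriv W * W^t)"
    unfolding fps_deriv_power by (simp add: mult.assoc)
  have h: "(fps_deriv (W^(t+1))) $ t = of_nat (t+1) * (W^(t+1)) $ (t+1)"
    by (simp only: fps_deriv_nth)
  have i: "(fps_deriv (W^(t+1))) $ t = of_nat (t+1) * (fps_deriv W * W^t) $ t"
    unfolding g by simp
  have nz: "of_nat (t+1) \<noteq> (0::complex)" by (simp only: of_nat_eq_0_iff)
  have "of_nat (t+1) * (fps_deriv W * W^t) $ t = of_nat (t+1) * (W^(t+1)) $ (t+1)"
    using h i by metis
  then have "(fps_deriv W * W^t) $ t = (W^(t+1)) $ (t+1)"
    using mult_left_cancel[OF nz] by blast
  then show ?thesis using Suc e f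
    by (simp add: mult.assoc)
qed

lemma fps_decomp:
  fixes H :: "complex fps"
  shows "H = (\<Sum>n=0..r. fps_const (H$n) * fps_X^n) + fps_X^(r+1) * Abs_fps (\<lambda>n. H $ (n + r + 1))"
proof (rule fps_ext)
  fix m
  have "(\<Sum>n=0..r. fps_const (H$n) * fps_X^n) $ m = (\<Sum>n=0..r. H $ n * (if m = n then 1 else 0))"
    by (simp add: fps_sum_nth fps_X_power_nth)
  also have "\<dots> = (\<Sum>n=0..r. if m = n then H $ n else 0)"
    by (intro sum.cong) auto
  also have "\<dots> = (if m \<le> r then H $ m else 0)"
    by (simp add: sum.delta sum.delta')
  finally have A: "(\<Sum>n=0..r. fps_const (H$n) * fps_X^n) $ m = (if m \<le> r then H $ m else 0)" .
  have B: "(fps_X^(r+1) * Abs_fps (\<lambda>n. H $ (n + r + 1))) $ m = (if m \<le> r then 0 else H $ m)"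
    by (simp only: fps_X_power_mult_nth) simp
  show "H $ m = ((\<Sum>n=0..r. fps_const (H$n) * fps_X^n) + fps_X^(r+1) * Abs_fps (\<lambda>n. H $ (n + r + 1))) $ m"
    using A B by simp
qed

lemma cv_term:
  fixes u W :: "complex fps" assumes uW: "u * W = 1" and n: "n \<le> r"
  shows "((fps_X*u)^n * fps_deriv (fps_X*u) * W^(r+1)) $ r = (if n = r then 1 else 0)"
proof -
  define s where "s = r - n"
  have r: "r = n + s" using n s_def by simp
  have w: "W^(r+1) = W^n * W^(s+1)" unfolding r by (simp only: power_add add.assoc)
  have p: "u^n * W^(r+1) = W^(s+1)"
  proof -
    have "u^n * W^(r+1) = (u*W)^n * W^(s+1)" unfolding w power_mult_distrib by (simp only: mult.assoc)
    then show ?thesis using uW by simp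
  qed
  have dd: "fps_deriv (fps_X*u) = u + fps_X * fps_deriv u" by (simp add: fps_deriv_mult)
  have "(fps_X*u)^n * fps_deriv (fps_X*u) * W^(r+1) = fps_X^n * ((u + fps_X * fps_deriv u) * (u^n * W^(r+1)))"
    unfolding dd power_mult_distrib by (simp only: mult_ac)
  also have "\<dots> = fps_X^n * ((u + fps_X * fps_deriv u) * W^(s+1))" unfolding p ..
  also have "(u + fps_X * fps_deriv u) * W^(s+1) = W^s + fps_X * fps_deriv u * W^(s+1)"
  proof -
    have "u * W^(s+1) = W^s" using uW by (simp add: mult.assoc[symmetric])
    then show ?thesis by (simp add: distrib_right)
  qed
  finally have "((fps_X*u)^n * fps_deriv (fps_X*u) * W^(r+1)) $ r = (W^s + fps_X * fps_deriv u * W^(s+1)) $ s"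
    by (simp only: fps_X_power_mult_nth) (simp add: r)
  also have "\<dots> = (if s = 0 then 1 else 0)" by (rule cv_aux[OF uW])
  finally show ?thesis using r by simp
qed

lemma change_var:
  fixes H u W :: "complex fps" assumes uW: "u * W = 1"
  shows "H $ r = ((H oo (fps_X*u)) * fps_deriv (fps_X*u) * W^(r+1)) $ r"
proof -
  define \<phi> where "\<phi> = fps_X * u"
  define R where "R = Abs_fps (\<lambda>n. H $ (n + r + 1))"
  define G where "G = fps_deriv \<phi> * W^(r+1)"
  have p0: "\<phi> $ 0 = 0" unfolding \<phi>_def by simp
  have xp: "fps_X^n oo \<phi> = \<phi>^n" for n
    using fps_compose_power[OF p0, of fps_X n] p0 by simp
  have "H oo \<phi> = ((\<Sum>n=0..r. fps_const (H$n) * fps_X^n) + fps_X^(r+1) * R) oo \<phi>"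
    using fps_decomp[of H r] unfolding R_def by simp
  also have "\<dots> = (\<Sum>n=0..r. fps_const (H$n) * \<phi>^n) + \<phi>^(r+1) * (R oo \<phi>)"
    by (simp only: fps_compose_add_distrib fps_compose_sum_distrib fps_compose_mult_distrib[OF p0]
        xp fps_const_compose)
  finally have e: "H oo \<phi> = (\<Sum>n=0..r. fps_const (H$n) * \<phi>^n) + \<phi>^(r+1) * (R oo \<phi>)" .
  have z: "(\<phi>^(r+1) * (R oo \<phi>) * G) $ r = 0"
  proof -
    have "\<phi>^(r+1) * (R oo \<phi>) * G = fps_X^(r+1) * (u^(r+1) * (R oo \<phi>) * G)"
      unfolding \<phi>_def power_mult_distrib by (simp only: mult_ac)
    then show ?thesis by (simp only: fps_X_power_mult_nth) simp
  qed
  have "((H oo \<phi>) * G) $ r = (\<Sum>n=0..r. H$n * (\<phi>^n * G) $ r)"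
    unfolding e distrib_right sum_distrib_right fps_add_nth fps_sum_nth z
    by (simp add: mult.assoc)
  also have "\<dots> = (\<Sum>n=0..r. H$n * (if n = r then 1 else 0))"
  proof (rule sum.cong[OF refl])
    fix n assume "n \<in> {0..r}"
    then have "n \<le> r" by simp
    from cv_term[OF uW this] show "H$n * (\<phi>^n * G) $ r = H$n * (if n = r then 1 else 0)"
      unfolding G_def \<phi>_def by (simp only: mult.assoc)
  qed
  also have "\<dots> = (\<Sum>n=0..r. if n = r then H$n else 0)"
    by (intro sum.cong refl) simp
  also have "\<dots> = H $ r" by (simp only: sum.delta finite_atLeastAtMost) simp
  finally show ?thesis unfolding G_def \<phi>_def by (simp add: mult.assoc)
qed

definition EE :: "complex fps" where "EE = fps_exp 1"
definition E2 :: "complex fps" where "E2 = Abs_fps (\<lambda>j. 1 / fact (j+1))"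
definition L1 :: "complex fps" where "L1 = Abs_fps (\<lambda>j. (-1)^j / of_nat (j+1))"

lemma EE_E2: "EE - 1 = fps_X * E2"
proof (rule fps_ext)
  fix n show "(EE - 1) $ n = (fps_X * E2) $ n"
    by (cases n) (simp_all add: EE_def E2_def algebra_simps)
qed

lemma phi0: "(EE - 1) $ 0 = 0" by (simp add: EE_def)
lemma phi1: "(EE - 1) $ 1 \<noteq> 0" by (simp add: EE_def)
lemma E20: "E2 $ 0 = 1" by (simp add: E2_def)

lemma L10: "L1 $ 0 = 1" by (simp add: L1_def)

lemma L1_ln: "fps_X * L1 = fps_ln 1"
proof (rule fps_ext)
  fix n show "(fps_X * L1) $ n = fps_ln 1 $ n"
    by (cases n) (simp_all add: L1_def fps_ln_nth)
qed

lemma ln_comp: "fps_ln 1 oo (EE - 1) = fps_X"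
  using fps_inv[OF phi0 phi1] fps_ln_fps_exp_inv[of "1::complex"] by (simp add: EE_def)

lemma L1_comp: "E2 * (L1 oo (EE - 1)) = 1"
proof -
  have "(fps_X * L1) oo (EE - 1) = fps_X" using L1_ln ln_comp by simp
  then have "(EE - 1) * (L1 oo (EE - 1)) = fps_X"
    by (simp only: fps_compose_mult_distrib[OF phi0] fps_X_fps_compose_startby0[OF phi0])
  then have "fps_X * (E2 * (L1 oo (EE - 1))) = fps_X * 1" by (simp add: EE_E2 mult.assoc)
  then show ?thesis using mult_left_cancel[of "fps_X :: complex fps"] by simp
qed

lemma deriv_phi: "fps_deriv (EE - 1) = EE" by (simp add: EE_def)

lemma binom_comp: "fps_binomial v oo (EE - 1) = fps_exp v"
proof -
  define G where "G = fps_binomial v oo (EE - 1)"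
  define B where "B = fps_binomial v"
  have u1: "(1 + fps_X :: complex fps) $ 0 \<noteq> 0" by simp
  have d1: "fps_deriv B * (1 + fps_X) = fps_const v * B"
    unfolding B_def fps_binomial_deriv fps_divide_unit[OF u1]
    using inverse_mult_eq_1[OF u1] by (simp add: mult.assoc)
  have c1: "(1 + fps_X) oo (EE - 1) = EE"
    by (simp add: fps_compose_add_distrib fps_X_fps_compose_startby0[OF phi0])
  have "fps_deriv G = (fps_deriv B oo (EE - 1)) * fps_deriv (EE - 1)"
    unfolding G_def B_def by (rule fps_compose_deriv[OF phi0])
  also have "\<dots> = (fps_deriv B oo (EE - 1)) * ((1 + fps_X) oo (EE - 1))"
    unfolding deriv_phi c1 ..
  also have "\<dots> = (fps_deriv B * (1 + fps_X)) oo (EE - 1)"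
    by (simp only: fps_compose_mult_distrib[OF phi0])
  also have "\<dots> = fps_const v * G" unfolding d1
    by (simp only: G_def B_def fps_compose_mult_distrib[OF phi0] fps_const_compose)
  finally have "fps_deriv G = fps_const v * G" .
  then have "G = fps_const (G $ 0) * fps_exp v" using fps_exp_unique_ODE by blast
  moreover have "G $ 0 = 1" unfolding G_def by simp
  ultimately show ?thesis unfolding G_def by simp
qed

definition Sf :: "nat \<Rightarrow> complex fps" where "Sf r = Abs_fps (\<lambda>k. fact (r+k) / fact k)"

lemma Sf_rec: "Sf (Suc r) * (1 - fps_X) = fps_const (of_nat (Suc r)) * Sf r"
proof (rule fps_ext)
  fix n
  have "(Sf (Suc r) * (1 - fps_X)) $ n = Sf (Suc r) $ n - (fps_X * Sf (Suc r)) $ n"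
    by (simp add: algebra_simps)
  also have "\<dots> = of_nat (Suc r) * Sf r $ n"
  proof (cases n)
    case 0 then show ?thesis by (simp add: Sf_def)
  next
    case (Suc j)
    define F :: complex where "F = fact (r + j + 1)"
    define f :: complex where "f = fact j"
    have F0: "F \<noteq> 0" unfolding F_def by (rule fact_nonzero)
    have f0: "f \<noteq> 0" unfolding f_def by (rule fact_nonzero)
    have a: "(fact (Suc r + Suc j) :: complex) = (of_nat r + of_nat j + 2) * F"
      unfolding F_def by (simp add: algebra_simps)
    have b: "(fact (Suc j) :: complex) = (of_nat j + 1) * f" unfolding f_def by (simp add: algebra_simps)
    have c: "(fact (Suc r + j) :: complex) = F" unfolding F_def by simp
    have d: "(fact (r + Suc j) :: complex) = F" unfolding F_def by simp
    have j0: "(of_nat j + 1 :: complex) \<noteq> 0" by (metis of_nat_Suc of_nat_eq_0_iff nat.distinct(1) add.commute)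
    have "Sf (Suc r) $ n - (fps_X * Sf (Suc r)) $ n = (of_nat r + of_nat j + 2) * F / ((of_nat j + 1) * f) - F / f"
    proof -
      have e1: "Sf (Suc r) $ n = (of_nat r + of_nat j + 2) * F / ((of_nat j + 1) * f)"
        unfolding Suc by (simp only: Sf_def fps_nth_Abs_fps a b)
      have "(fps_X * Sf (Suc r)) $ n = Sf (Suc r) $ j" unfolding Suc by simp
      also have "\<dots> = F / f" by (simp only: Sf_def fps_nth_Abs_fps c f_def)
      finally show ?thesis using e1 by simp
    qed
    also have "\<dots> = (of_nat r + 1) * (F / ((of_nat j + 1) * f))"
    proof -
      have q: "F / f = (of_nat j + 1) * F / ((of_nat j + 1) * f)" using j0 by simp
      have "(of_nat r + of_nat j + 2) * F / ((of_nat j + 1) * f) - (of_nat j + 1) * F / ((of_nat j + 1) * f)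
          = ((of_nat r + of_nat j + 2) * F - (of_nat j + 1) * F) / ((of_nat j + 1) * f)"
        by (rule diff_divide_distrib[symmetric])
      also have "(of_nat r + of_nat j + 2) * F - (of_nat j + 1) * F = (of_nat r + 1) * (F :: complex)"
        by (simp add: algebra_simps)
      finally show ?thesis unfolding q by simp
    qed
    also have "\<dots> = of_nat (Suc r) * Sf r $ n"
      using Suc by (simp only: Sf_def fps_nth_Abs_fps b d) simp
    finally show ?thesis .
  qed
  finally show "(Sf (Suc r) * (1 - fps_X)) $ n = (fps_const (of_nat (Suc r)) * Sf r) $ n" by simp
qed

lemma Sf_prod: "Sf r * (1 - fps_X)^(r+1) = fps_const (fact r)"
proof (induction r)
  case 0
  show ?case
  proof (rule fps_ext)
    fix n show "(Sf 0 * (1 - fps_X)^(0+1)) $ n = fps_const (fact 0) $ n"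
      by (simp add: Sf_def algebra_simps)
  qed
next
  case (Suc r)
  have "Sf (Suc r) * (1 - fps_X)^(Suc r + 1) = (Sf (Suc r) * (1 - fps_X)) * (1 - fps_X)^(r+1)"
    by (simp add: mult.assoc)
  also have "\<dots> = fps_const (of_nat (Suc r)) * (Sf r * (1 - fps_X)^(r+1))"
    unfolding Sf_rec by (simp add: mult.assoc)
  also have "\<dots> = fps_const (fact (Suc r))" unfolding Suc.IH by (simp add: fps_const_mult)
  finally show ?case .
qed

lemma Sf_comp: assumes y0: "y $ 0 = 0"
  shows "(Sf r oo y) * (1 - y)^(r+1) = fps_const (fact r)"
proof -
  have "(Sf r * (1 - fps_X)^(r+1)) oo y = fps_const (fact r)" unfolding Sf_prod by (rule fps_const_compose)
  then show ?thesis
    by (simp only: fps_compose_mult_distrib[OF y0] fps_compose_power[OF y0, symmetric]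
        fps_compose_sub_distrib fps_compose_1 fps_X_fps_compose_startby0[OF y0])
qed

lemma Sf_sum: "(\<Sum>k=0..m. fact (r+k) / fact k * d^k * (y^k) $ m) = (Sf r oo (fps_const d * y)) $ m"
  unfolding fps_compose_nth
  by (intro sum.cong refl) (simp add: Sf_def power_mult_distrib fps_const_power mult.assoc)

definition A1 :: "complex fps" where "A1 = Abs_fps (\<lambda>j. if j = 0 then 0 else 1 / of_nat (j + 1))"
definition A2 :: "complex fps" where "A2 = Abs_fps (\<lambda>j. if j = 0 then 0 else 1 / fact (j + 1))"

lemma dm1: "demoivre (\<lambda>j. 1 / of_nat (j + 1)) m k = (A1^k) $ m"
  unfolding demoivre_def A1_def by (rule refl)
lemma dm2: "demoivre (\<lambda>j. 1 / fact (j + 1)) m k = (A2^k) $ m"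
  unfolding demoivre_def A2_def by (rule refl)

lemma A2_E2: "A2 = E2 - 1"
  by (rule fps_ext) (simp add: A2_def E2_def)

lemma A1_neg: "A1 oo (- fps_X) = L1 - 1"
  unfolding fps_compose_uminus' by (rule fps_ext) (simp add: A1_def L1_def)

definition Dl :: "complex \<Rightarrow> complex fps" where "Dl w = fps_const w * E2 - 1"

lemma Dl0: "Dl w $ 0 = w - 1" by (simp add: Dl_def E20)

lemma Dl_inv: assumes "w \<noteq> 1" shows "Dl w * inverse (Dl w) = 1"
  using assms by (intro inverse_mult_eq_1') (simp add: Dl0)

lemma Ut_formula: assumes w1: "w \<noteq> 1"
  shows "U_tilde r w v = - fact r * (fps_exp v * inverse (Dl w) ^ (r+1)) $ r"
proof -
  define d where "d = (- w) / (w - 1)"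
  define P2 where "P2 = fps_const (1 / (w-1)^(r+1)) * (Sf r oo (fps_const d * A2))"
  define V where "V = inverse (Dl w)"
  have w0: "w - 1 \<noteq> 0" using w1 by simp
  have inner: "(\<Sum>k=0..m. (-w)^k / (w - 1)^(r + k + 1) * (fact (r + k) / fact k) *
           demoivre (\<lambda>j. 1 / fact (j + 1)) m k) = P2 $ m" for m
  proof -
    have "(\<Sum>k=0..m. (-w)^k / (w - 1)^(r + k + 1) * (fact (r + k) / fact k) *
           demoivre (\<lambda>j. 1 / fact (j + 1)) m k)
        = (\<Sum>k=0..m. 1 / (w-1)^(r+1) * (fact (r+k) / fact k * d^k * (A2^k) $ m))"
    proof (intro sum.cong refl)
      fix k
      have dk: "d^k = (-w)^k / (w-1)^k" unfolding d_def by (simp only: power_divide)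
      have pk: "(w-1)^(r+k+1) = (w-1)^(r+1) * (w-1)^k"
        unfolding power_add[symmetric] by (simp add: algebra_simps)
      have nz1: "(w-1)^(r+1) \<noteq> 0" and nz2: "(w-1)^k \<noteq> 0" using w0 by simp_all
      have "(-w)^k / (w - 1)^(r + k + 1) = 1 / (w-1)^(r+1) * d^k"
        unfolding dk pk using nz1 nz2 by simp
      then show "(-w)^k / (w - 1)^(r + k + 1) * (fact (r + k) / fact k) * demoivre (\<lambda>j. 1 / fact (j + 1)) m k
          = 1 / (w-1)^(r+1) * (fact (r+k) / fact k * d^k * (A2^k) $ m)"
        by (simp only: dm2) (simp add: mult_ac)
    qed
    also have "\<dots> = 1 / (w-1)^(r+1) * (Sf r oo (fps_const d * A2)) $ m"
      by (simp only: sum_distrib_left[symmetric] Sf_sum)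
    finally show ?thesis unfolding P2_def by simp
  qed
  have "U_tilde r w v = - (\<Sum>m=0..r. P2 $ m * fps_exp v $ (r - m))"
    unfolding U_tilde_def inner by (simp add: mult_ac)
  also have "\<dots> = - (P2 * fps_exp v) $ r" by (simp add: fps_mult_nth)
  finally have e1: "U_tilde r w v = - (P2 * fps_exp v) $ r" .
  define Y where "Y = fps_const d * A2"
  have Y0: "Y $ 0 = 0" by (simp add: Y_def A2_def)
  have h: "(1 - Y) * fps_const (w - 1) = Dl w"
  proof (rule fps_ext)
    fix n show "((1 - Y) * fps_const (w - 1)) $ n = Dl w $ n"
      using w0 by (cases n) (simp_all add: Y_def d_def Dl_def A2_E2 E20)
  qed
  have "Dl w ^ (r+1) = (1 - Y)^(r+1) * fps_const ((w - 1)^(r+1))"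
    by (simp only: h[symmetric] power_mult_distrib fps_const_power)
  then have "P2 * Dl w ^ (r+1) = fps_const (1 / (w-1)^(r+1)) * ((Sf r oo Y) * (1 - Y)^(r+1)) * fps_const ((w - 1)^(r+1))"
    unfolding P2_def Y_def by (simp only: mult_ac)
  also have "\<dots> = fps_const (fact r)"
  proof -
    have "1 / (w-1)^(r+1) * fact r * (w-1)^(r+1) = (fact r :: complex)" using w0 by simp
    then show ?thesis unfolding Sf_comp[OF Y0] by (simp only: fps_const_mult)
  qed
  finally have p: "P2 * Dl w ^ (r+1) = fps_const (fact r)" .
  have "P2 = P2 * (Dl w * V) ^ (r+1)" unfolding V_def Dl_inv[OF w1] by simp
  also have "\<dots> = (P2 * Dl w ^ (r+1)) * V^(r+1)" by (simp only: power_mult_distrib mult_ac)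
  finally have "P2 = fps_const (fact r) * V^(r+1)" unfolding p .
  then have "P2 * fps_exp v = fps_const (fact r) * (fps_exp v * V^(r+1))" by (simp only: mult_ac)
  then have c: "(P2 * fps_exp v) $ r = fact r * (fps_exp v * V^(r+1)) $ r"
    by (simp only: fps_mult_left_const_nth)
  show ?thesis using e1 c unfolding V_def by simp
qed

lemma U_formula: assumes w1: "w \<noteq> 1"
  shows "U r w v = (if r = 0 then 1 else 0) - w * fact r * (fps_exp v * EE * inverse (Dl w) ^ (r+1)) $ r"
proof -
  define c where "c = 1 / (w - 1)"
  define P where "P = fps_const (w / (w-1)^(r+1)) * (Sf r oo (fps_const c * A1))"
  define V where "V = inverse (Dl w)"
  have w0: "w - 1 \<noteq> 0" using w1 by simp
  have inner: "(\<Sum>k=0..m. w / (w - 1)^(r + k + 1) * (fact (r + k) / fact k) *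
           demoivre (\<lambda>j. 1 / of_nat (j + 1)) m k) = P $ m" for m
  proof -
    have "(\<Sum>k=0..m. w / (w - 1)^(r + k + 1) * (fact (r + k) / fact k) *
           demoivre (\<lambda>j. 1 / of_nat (j + 1)) m k)
        = (\<Sum>k=0..m. w / (w-1)^(r+1) * (fact (r+k) / fact k * c^k * (A1^k) $ m))"
    proof (intro sum.cong refl)
      fix k
      have dk: "c^k = 1 / (w-1)^k" unfolding c_def by (simp only: power_divide power_one)
      have pk: "(w-1)^(r+k+1) = (w-1)^(r+1) * (w-1)^k"
        unfolding power_add[symmetric] by (simp add: algebra_simps)
      have nz1: "(w-1)^(r+1) \<noteq> 0" and nz2: "(w-1)^k \<noteq> 0" using w0 by simp_all
      have "w / (w - 1)^(r + k + 1) = w / (w-1)^(r+1) * c^k"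
        unfolding dk pk using nz1 nz2 by simp
      then show "w / (w - 1)^(r + k + 1) * (fact (r + k) / fact k) * demoivre (\<lambda>j. 1 / of_nat (j + 1)) m k
          = w / (w-1)^(r+1) * (fact (r+k) / fact k * c^k * (A1^k) $ m)"
        by (simp only: dm1) (simp add: mult_ac)
    qed
    also have "\<dots> = w / (w-1)^(r+1) * (Sf r oo (fps_const c * A1)) $ m"
      by (simp only: sum_distrib_left[symmetric] Sf_sum)
    finally show ?thesis unfolding P_def by simp
  qed
  define P' where "P' = P oo (- fps_X)"
  have mX0: "(- fps_X :: complex fps) $ 0 = 0" by simp
  have "(\<Sum>m=0..r. (-1)^m * (v gchoose (r - m)) *
        (\<Sum>k=0..m. w / (w - 1)^(r + k + 1) * (fact (r + k) / fact k) *
           demoivre (\<lambda>j. 1 / of_nat (j + 1)) m k)) = (\<Sum>m=0..r. P' $ m * fps_binomial v $ (r - m))"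
    unfolding inner P'_def fps_compose_uminus' by (intro sum.cong refl) (simp add: mult_ac)
  also have "\<dots> = (P' * fps_binomial v) $ r" by (simp add: fps_mult_nth)
  finally have e1: "U r w v = (if r = 0 then 1 else 0) - (P' * fps_binomial v) $ r"
    unfolding U_def by simp
  define Y where "Y = fps_const c * (L1 - 1)"
  have Y0: "Y $ 0 = 0" by (simp add: Y_def L1_def)
  have A10: "(fps_const c * A1) $ 0 = 0" by (simp add: A1_def)
  have P'Y: "P' = fps_const (w / (w-1)^(r+1)) * (Sf r oo Y)"
  proof -
    have "P' = fps_const (w / (w-1)^(r+1)) * ((Sf r oo (fps_const c * A1)) oo (- fps_X))"
      unfolding P'_def P_def by (simp only: fps_compose_mult_distrib[OF mX0] fps_const_compose)
    also have "(Sf r oo (fps_const c * A1)) oo (- fps_X) = Sf r oo ((fps_const c * A1) oo (- fps_X))"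
      by (rule fps_compose_assoc[OF mX0 A10, symmetric])
    also have "(fps_const c * A1) oo (- fps_X) = Y"
      unfolding Y_def by (simp only: fps_compose_mult_distrib[OF mX0] fps_const_compose A1_neg)
    finally show ?thesis .
  qed
  define Q where "Q = fps_const w - L1"
  have h: "(1 - Y) * fps_const (w - 1) = Q"
  proof (rule fps_ext)
    fix n show "((1 - Y) * fps_const (w - 1)) $ n = Q $ n"
      using w0 by (cases n) (simp_all add: Y_def c_def Q_def L10)
  qed
  have "Q ^ (r+1) = (1 - Y)^(r+1) * fps_const ((w - 1)^(r+1))"
    by (simp only: h[symmetric] power_mult_distrib fps_const_power)
  then have "P' * Q ^ (r+1) = fps_const (w / (w-1)^(r+1)) * ((Sf r oo Y) * (1 - Y)^(r+1)) * fps_const ((w - 1)^(r+1))"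
    unfolding P'Y by (simp only: mult_ac)
  also have "\<dots> = fps_const (w * fact r)"
  proof -
    have "w / (w-1)^(r+1) * fact r * (w-1)^(r+1) = (w * fact r :: complex)" using w0 by simp
    then show ?thesis unfolding Sf_comp[OF Y0] by (simp only: fps_const_mult)
  qed
  finally have pq: "P' * Q ^ (r+1) = fps_const (w * fact r)" .
  define W where "W = inverse E2"
  have uW: "E2 * W = 1" unfolding W_def by (intro inverse_mult_eq_1') (simp add: E20)
  define H where "H = P' * fps_binomial v"
  have xe: "fps_X * E2 = EE - 1" using EE_E2 by simp
  have cv: "H $ r = ((H oo (EE - 1)) * EE * W^(r+1)) $ r"
    using change_var[OF uW, of H r] unfolding xe deriv_phi .
  define R where "R = P' oo (EE - 1)"
  have Hc: "H oo (EE - 1) = R * fps_exp v"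
    unfolding H_def R_def by (simp only: fps_compose_mult_distrib[OF phi0] binom_comp)
  have Qc: "(Q oo (EE - 1)) * E2 = Dl w"
  proof -
    have qq: "Q oo (EE - 1) = fps_const w - (L1 oo (EE - 1))"
      unfolding Q_def by (simp only: fps_compose_sub_distrib fps_const_compose)
    have "(Q oo (EE - 1)) * E2 = fps_const w * E2 - E2 * (L1 oo (EE - 1))"
      unfolding qq by (simp add: algebra_simps)
    then show ?thesis unfolding L1_comp Dl_def .
  qed
  have rq: "R * (Q oo (EE - 1))^(r+1) = fps_const (w * fact r)"
    unfolding R_def using arg_cong[OF pq, of "\<lambda>f. f oo (EE - 1)"]
    by (simp only: fps_compose_mult_distrib[OF phi0] fps_compose_power[OF phi0] fps_const_compose)
  have "R * Dl w ^ (r+1) = (R * (Q oo (EE - 1))^(r+1)) * E2^(r+1)"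
    unfolding Qc[symmetric] by (simp only: power_mult_distrib mult_ac)
  then have "R * Dl w ^ (r+1) = fps_const (w * fact r) * E2^(r+1)" unfolding rq .
  then have "R = fps_const (w * fact r) * E2^(r+1) * V^(r+1)"
  proof -
    assume a: "R * Dl w ^ (r+1) = fps_const (w * fact r) * E2^(r+1)"
    have "R = R * (Dl w * V)^(r+1)" unfolding V_def Dl_inv[OF w1] by simp
    also have "\<dots> = (R * Dl w ^ (r+1)) * V^(r+1)" by (simp only: power_mult_distrib mult_ac)
    finally show ?thesis unfolding a .
  qed
  then have "(H oo (EE - 1)) * EE * W^(r+1) = fps_const (w * fact r) * (fps_exp v * EE * V^(r+1)) * (E2 * W)^(r+1)"
    unfolding Hc by (simp only: power_mult_distrib mult_ac)
  also have "\<dots> = fps_const (w * fact r) * (fps_exp v * EE * V^(r+1))" unfolding uW by simp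
  finally have "H $ r = w * fact r * (fps_exp v * EE * V^(r+1)) $ r"
    unfolding cv by (simp only: fps_mult_left_const_nth)
  then show ?thesis using e1 unfolding H_def V_def by simp
qed

lemma wEE: "fps_const w * EE = 1 + Dl w + fps_X * fps_deriv (Dl w)"
proof -
  have "fps_deriv (fps_X * E2) = fps_deriv (EE - 1)" using EE_E2 by simp
  then have h: "EE = E2 + fps_X * fps_deriv E2" unfolding deriv_phi by (simp add: algebra_simps)
  have "1 + Dl w + fps_X * fps_deriv (Dl w) = fps_const w * (E2 + fps_X * fps_deriv E2)"
    unfolding Dl_def by (simp add: algebra_simps)
  then show ?thesis unfolding h by simp
qed

lemma arith1:
  fixes X A a b n v d :: complex
  assumes "X = A + a - b" "n * a = n * b + v * d"
  shows "X * n = A * n + v * d"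
proof -
  have "X * n = A * n + (n * a - n * b)" unfolding assms(1) by (simp add: algebra_simps)
  also have "n * a - n * b = v * d" using assms(2) by (simp add: diff_eq_eq add.commute)
  finally show ?thesis .
qed

lemma key:
  fixes D V e :: "complex fps"
  assumes DV: "D * V = 1" and de: "fps_deriv e = fps_const v * e"
  shows "(e * (1 + D + fps_X * fps_deriv D) * V^(s+2)) $ (s+1) * of_nat (s+1)
       = (e * V^(s+2)) $ (s+1) * of_nat (s+1) + v * (e * V^(s+1)) $ s"
proof -
  have d: "fps_deriv D * V + D * fps_deriv V = 0"
    using arg_cong[OF DV, of fps_deriv] by (simp add: algebra_simps)
  have dv: "fps_deriv D * V^2 = - fps_deriv V"
  proof -
    have "fps_deriv D * V^2 = (fps_deriv D * V + D * fps_deriv V) * V - (D*V) * fps_deriv V"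
      by (simp add: algebra_simps power2_eq_square)
    then show ?thesis using d DV by simp
  qed
  have p1: "V^(s+2) = V * V^(s+1)" by simp
  have p2: "V^(s+2) = V^2 * V^s" by (simp add: power_add[symmetric])
  have t1: "e * D * V^(s+2) = e * V^(s+1)"
  proof -
    have "e * D * V^(s+2) = e * (D * V) * V^(s+1)" unfolding p1 by (simp only: mult_ac)
    then show ?thesis unfolding DV by simp
  qed
  have t2: "e * (fps_X * fps_deriv D) * V^(s+2) = - (fps_X * (e * fps_deriv V * V^s))"
  proof -
    have "e * (fps_X * fps_deriv D) * V^(s+2) = fps_X * e * (fps_deriv D * V^2) * V^s"
      unfolding p2 by (simp only: mult_ac)
    then show ?thesis unfolding dv by simp
  qed
  have ex: "e * (1 + D + fps_X * fps_deriv D) * V^(s+2)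
      = e * V^(s+2) + e * D * V^(s+2) + e * (fps_X * fps_deriv D) * V^(s+2)"
    by (simp only: distrib_left distrib_right mult_1_right)
  have c1: "(e * (1 + D + fps_X * fps_deriv D) * V^(s+2)) $ (s+1)
      = (e * V^(s+2)) $ (s+1) + (e * V^(s+1)) $ (s+1) - (e * fps_deriv V * V^s) $ s"
    unfolding ex t1 t2 by simp
  have dp: "fps_deriv (V^(s+1)) = fps_const (of_nat (s+1)) * (fps_deriv V * V^s)"
    unfolding fps_deriv_power by (simp add: mult.assoc)
  have "fps_deriv (e * V^(s+1)) = e * fps_deriv (V^(s+1)) + fps_deriv e * V^(s+1)"
    by (rule fps_deriv_mult)
  also have "\<dots> = fps_const (of_nat (s+1)) * (e * fps_deriv V * V^s) + fps_const v * (e * V^(s+1))"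
    unfolding dp de by (simp only: mult_ac)
  finally have dA: "(fps_deriv (e * V^(s+1))) $ s = of_nat (s+1) * (e * fps_deriv V * V^s) $ s + v * (e * V^(s+1)) $ s"
    by simp
  have dB: "(fps_deriv (e * V^(s+1))) $ s = of_nat (s+1) * (e * V^(s+1)) $ (s+1)"
    by (simp only: fps_deriv_nth)
  have m: "of_nat (s+1) * (e * V^(s+1)) $ (s+1) = of_nat (s+1) * (e * fps_deriv V * V^s) $ s + v * (e * V^(s+1)) $ s"
    using dA dB by metis
  show ?thesis by (rule arith1[OF c1 m])
qed

theorem proposition6p4:
  fixes v w :: complex
  assumes "w \<noteq> 1"
  shows "U 0 w v = U_tilde 0 w v \<and>
         (\<forall>r::nat. r \<ge> 1 \<longrightarrow> U r w v = U_tilde r w v + v * U_tilde (r - 1) w v)"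
proof
  define V where "V = inverse (Dl w)"
  have DV: "Dl w * V = 1" unfolding V_def by (rule Dl_inv[OF assms])
  have V0: "V $ 0 = 1 / (w - 1)" unfolding V_def by (simp add: Dl0 divide_inverse)
  have w0: "w - 1 \<noteq> 0" using assms by simp
  show "U 0 w v = U_tilde 0 w v"
    unfolding U_formula[OF assms] Ut_formula[OF assms] V_def[symmetric]
    using V0 w0 by (simp add: EE_def field_simps)
  show "\<forall>r::nat. r \<ge> 1 \<longrightarrow> U r w v = U_tilde r w v + v * U_tilde (r - 1) w v"
  proof (intro allI impI)
    fix r :: nat assume "r \<ge> 1"
    then obtain s where r: "r = s + 1" by (metis add.commute le_add_diff_inverse)
    define e where "e = fps_exp v"
    have de: "fps_deriv e = fps_const v * e" unfolding e_def by simp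
    define A where "A = (e * V^(s+2)) $ (s+1)"
    define X1 where "X1 = (e * (1 + Dl w + fps_X * fps_deriv (Dl w)) * V^(s+2)) $ (s+1)"
    define Dd where "Dd = (e * V^(s+1)) $ s"
    have K: "X1 * of_nat (s+1) = A * of_nat (s+1) + v * Dd"
      unfolding X1_def A_def Dd_def by (rule key[OF DV de])
    have hU: "U r w v = - fact (s+1) * X1"
    proof -
      have "e * (fps_const w * EE) * V^(s+2) = fps_const w * (e * EE * V^(s+2))" by (simp only: mult_ac)
      then have x1: "X1 = w * (e * EE * V^(s+2)) $ (s+1)"
        unfolding X1_def wEE[symmetric] by (simp only: fps_mult_left_const_nth)
      have "U r w v = - fact (s+1) * (w * (e * EE * V^(s+2)) $ (s+1))"
        unfolding U_formula[OF assms] V_def[symmetric] r e_def[symmetric] by simp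
      then show ?thesis unfolding x1 .
    qed
    have hUt: "U_tilde r w v = - fact (s+1) * A"
      unfolding Ut_formula[OF assms] V_def[symmetric] r e_def[symmetric] A_def by simp
    have hUs: "U_tilde (r - 1) w v = - fact s * Dd"
      unfolding Ut_formula[OF assms] V_def[symmetric] r e_def[symmetric] Dd_def by simp
    have f: "(fact (s+1) :: complex) = of_nat (s+1) * fact s" by simp
    show "U r w v = U_tilde r w v + v * U_tilde (r - 1) w v"
      unfolding hU hUt hUs f
    proof -
      have "- (of_nat (s+1) * fact s) * X1 = - fact s * (X1 * of_nat (s+1))" by (simp add: mult_ac)
      also have "\<dots> = - fact s * (A * of_nat (s+1) + v * Dd)" unfolding K ..
      also have "\<dots> = - (of_nat (s+1) * fact s) * A + v * (- fact s * Dd)" by (simp add: algebra_simps)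
      finally show "- (of_nat (s+1) * fact s) * X1 = - (of_nat (s+1) * fact s) * A + v * (- fact s * Dd)" .
    qed
  qed
qed

end
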